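(* Let $a>0$, $D_L>0$, $\ell>0$, and let $v_e:[0,\ell]\to\mathbb R$ be continuous with $a<v_e(x)<2a$ for all $x\in[0,\ell]$. For $\lambda\in\mathbb C$ with $\mathrm{Re}(\lambda)\ge0$ define $$f(x,\lambda)=\frac{(\lambda+1)\,v_e(x)^2}{\lambda-1+2a/v_e(x)}+\lambda .$$ Then $f(x,\lambda)$ is well defined (the denominator is nonzero) and $\mathrm{Re}\,f(x,\lambda)>0$ for all $x\in[0,\ell]$. Moreover, if $\eta\in C^2((0,\ell))\cap C^1([0,\ell])$ is a complex-valued solution of $$D_L\,\eta_{xx}-f(x,\lambda)\,\eta=0\ \text{ on }(0,\ell),\qquad \eta(0)=0,\quad \eta_x(\ell)=0,$$ then $\eta\equiv0$ on $[0,\ell]$; in particular $\eta_x(0)=0$.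
   Context: This is the outer eigenvalue problem arising in the linear stability analysis of Schnakenberg spike equilibria, where $v_e$ is the outer steady-state activator profile. *)

theory Defs
  imports "HOL-Analysis.Analysis"
begin

definition schnak_f :: "real \<Rightarrow> (real \<Rightarrow> real) \<Rightarrow> real \<Rightarrow> complex \<Rightarrow> complex" where
  "schnak_f a ve x lam =
     (lam + 1) * complex_of_real ((ve x)\<^sup>2) / (lam - 1 + complex_of_real (2 * a / ve x)) + lam"

end

theory Submission
  imports Defs
begin

lemma part1:
  fixes a v :: real and lam :: complex
  assumes ha: "a > 0" and hv: "a < v" "v < 2*a" and hlam: "Re lam \<ge> 0"
  shows "lam - 1 + complex_of_real (2 * a / v) \<noteq> 0 \<and>
         Re ((lam + 1) * complex_of_real (v\<^sup>2) / (lam - 1 + complex_of_real (2 * a / v)) + lam) > 0"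
proof -
  define c where "c = 2*a/v - 1"
  have vpos: "v > 0" using ha hv by linarith
  have c0: "c > 0" using hv vpos unfolding c_def by (simp add: field_simps)
  have d: "lam - 1 + complex_of_real (2 * a / v) = lam + complex_of_real c"
    unfolding c_def by (simp add: algebra_simps)
  have ReD: "Re (lam + complex_of_real c) > 0" using c0 hlam by simp
  have nz: "lam + complex_of_real c \<noteq> 0"
  proof
    assume "lam + complex_of_real c = 0"
    hence "Re (lam + complex_of_real c) = 0" by simp
    with ReD show False by simp
  qed
  have den: "(Re (lam + complex_of_real c))\<^sup>2 + (Im (lam + complex_of_real c))\<^sup>2 > 0"
    using ReD by (simp add: add_pos_nonneg)
  have num: "Re ((lam + 1) * complex_of_real (v\<^sup>2)) * Re (lam + complex_of_real c)
      + Im ((lam + 1) * complex_of_real (v\<^sup>2)) * Im (lam + complex_of_real c) > 0"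
  proof -
    have "Re ((lam + 1) * complex_of_real (v\<^sup>2)) * Re (lam + complex_of_real c)
      + Im ((lam + 1) * complex_of_real (v\<^sup>2)) * Im (lam + complex_of_real c)
      = v\<^sup>2 * ((Re lam + 1) * (Re lam + c) + (Im lam)\<^sup>2)"
      by (simp add: algebra_simps power2_eq_square)
    moreover have "(Re lam + 1) * (Re lam + c) + (Im lam)\<^sup>2 > 0"
      using hlam c0 by (simp add: add_pos_nonneg)
    moreover have "v\<^sup>2 > 0" using vpos by simp
    ultimately show ?thesis by simp
  qed
  have "Re ((lam + 1) * complex_of_real (v\<^sup>2) / (lam + complex_of_real c)) > 0"
    unfolding Re_divide using num den by simp
  thus ?thesis unfolding d plus_complex.sel using nz hlam add_pos_nonneg by blast
qed

theorem mainTheorem9: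
  fixes a DL l :: real and ve :: "real \<Rightarrow> real" and lam :: complex
  assumes ha: "a > 0" and hDL: "DL > 0" and hl: "l > 0"
    and hcont: "continuous_on {0..l} ve"
    and hbnd: "\<And>x. x \<in> {0..l} \<Longrightarrow> a < ve x \<and> ve x < 2 * a"
    and hlam: "Re lam \<ge> 0"
  shows "(\<forall>x\<in>{0..l}. lam - 1 + complex_of_real (2 * a / ve x) \<noteq> 0
                      \<and> Re (schnak_f a ve x lam) > 0)
       \<and> (\<forall>(eta :: real \<Rightarrow> complex) eta' eta''.
            continuous_on {0..l} eta'
          \<and> (\<forall>x\<in>{0..l}. (eta has_vector_derivative eta' x) (at x within {0..l}))
          \<and> continuous_on {0<..<l} eta''
          \<and> (\<forall>x\<in>{0<..<l}. (eta' has_vector_derivative eta'' x) (at x))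
          \<and> (\<forall>x\<in>{0<..<l}. complex_of_real DL * eta'' x - schnak_f a ve x lam * eta x = 0)
          \<and> eta 0 = 0 \<and> eta' l = 0
          \<longrightarrow> (\<forall>x\<in>{0..l}. eta x = 0) \<and> eta' 0 = 0)"
proof (intro conjI allI impI)
  have P1: "\<And>x. x \<in> {0..l} \<Longrightarrow> lam - 1 + complex_of_real (2 * a / ve x) \<noteq> 0
                      \<and> Re (schnak_f a ve x lam) > 0"
    unfolding schnak_f_def using part1 ha hbnd hlam by blast
  then show "\<forall>x\<in>{0..l}. lam - 1 + complex_of_real (2 * a / ve x) \<noteq> 0
                      \<and> Re (schnak_f a ve x lam) > 0" by blast
  fix eta eta' eta'' :: "real \<Rightarrow> complex"
  assume H: "continuous_on {0..l} eta'
          \<and> (\<forall>x\<in>{0..l}. (eta has_vector_derivative eta' x) (at x within {0..l}))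
          \<and> continuous_on {0<..<l} eta''
          \<and> (\<forall>x\<in>{0<..<l}. (eta' has_vector_derivative eta'' x) (at x))
          \<and> (\<forall>x\<in>{0<..<l}. complex_of_real DL * eta'' x - schnak_f a ve x lam * eta x = 0)
          \<and> eta 0 = 0 \<and> eta' l = 0"
  have c1: "continuous_on {0..l} eta'" using H by blast
  have d1: "\<And>x. x \<in> {0..l} \<Longrightarrow> (eta has_vector_derivative eta' x) (at x within {0..l})" using H by blast
  have d2: "\<And>x. x \<in> {0<..<l} \<Longrightarrow> (eta' has_vector_derivative eta'' x) (at x)" using H by blast
  have ode: "\<And>x. x \<in> {0<..<l} \<Longrightarrow> complex_of_real DL * eta'' x = schnak_f a ve x lam * eta x" using H by auto
  have e0: "eta 0 = 0" and el: "eta' l = 0" using H by auto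
  have c0: "continuous_on {0..l} eta"
    using d1 by (meson continuous_on_eq_continuous_within has_vector_derivative_continuous)
  define E where "E x = Re (eta' x * cnj (eta x))" for x
  have cE: "continuous_on {0..l} E" unfolding E_def
    by (intro continuous_intros c1 c0)
  have d1o: "\<And>x. x \<in> {0<..<l} \<Longrightarrow> (eta has_vector_derivative eta' x) (at x)"
  proof -
    fix x assume x: "x \<in> {0<..<l}"
    have "x \<in> interior {0..l}" using x by simp
    thus "(eta has_vector_derivative eta' x) (at x)"
      using d1[of x] x at_within_interior by fastforce
  qed
  define D where "D x = (cmod (eta' x))\<^sup>2 + Re (schnak_f a ve x lam) * (cmod (eta x))\<^sup>2 / DL" for x
  have dE: "\<And>x. x \<in> {0<..<l} \<Longrightarrow> DERIV E x :> D x"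
  proof -
    fix x assume x: "x \<in> {0<..<l}"
    have "((\<lambda>x. eta' x * cnj (eta x)) has_vector_derivative
            (eta' x * cnj (eta' x) + eta'' x * cnj (eta x))) (at x)"
      by (intro has_vector_derivative_mult has_vector_derivative_cnj d2 d1o x)
    from has_field_derivative_Re[OF this]
    have "DERIV E x :> Re (eta' x * cnj (eta' x) + eta'' x * cnj (eta x))"
      unfolding E_def .
    have q1: "eta'' x = schnak_f a ve x lam * eta x / complex_of_real DL"
      using ode[OF x] hDL by (simp add: field_simps)
    have q2: "eta' x * cnj (eta' x) = complex_of_real ((cmod (eta' x))\<^sup>2)"
      by (rule complex_norm_square[symmetric])
    have q3: "schnak_f a ve x lam * eta x / complex_of_real DL * cnj (eta x)
        = schnak_f a ve x lam * complex_of_real ((cmod (eta x))\<^sup>2) / complex_of_real DL"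
      unfolding complex_norm_square by (simp add: ac_simps)
    have "eta' x * cnj (eta' x) + eta'' x * cnj (eta x) =
       complex_of_real ((cmod (eta' x))\<^sup>2) + schnak_f a ve x lam * complex_of_real ((cmod (eta x))\<^sup>2) / complex_of_real DL"
      unfolding q1 q2 q3 ..
    hence "Re (eta' x * cnj (eta' x) + eta'' x * cnj (eta x)) = D x"
      unfolding D_def by (simp only: plus_complex.sel times_complex.sel Re_divide_of_real
          Re_complex_of_real Im_complex_of_real mult_zero_right diff_zero)
    with \<open>DERIV E x :> Re (eta' x * cnj (eta' x) + eta'' x * cnj (eta x))\<close>
    show "DERIV E x :> D x" by simp
  qed
  have Dnn: "\<And>x. x \<in> {0<..<l} \<Longrightarrow> D x \<ge> 0"
  proof -
    fix x assume x: "x \<in> {0<..<l}"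
    have "Re (schnak_f a ve x lam) > 0" using P1[of x] x by auto
    thus "D x \<ge> 0" unfolding D_def using hDL by (simp add: add_nonneg_nonneg)
  qed
  have E0: "E 0 = 0" unfolding E_def using e0 by simp
  have El: "E l = 0" unfolding E_def using el by simp
  have Ez: "\<And>x. x \<in> {0..l} \<Longrightarrow> E x = 0"
  proof -
    fix x assume x: "x \<in> {0..l}"
    have "E 0 \<le> E x"
    proof (rule DERIV_nonneg_imp_increasing_open[of 0 x])
      show "0 \<le> x" using x by simp
      fix y assume "0 < y" "y < x"
      hence y: "y \<in> {0<..<l}" using x by auto
      show "\<exists>z. DERIV E y :> z \<and> z \<ge> 0" using dE[OF y] Dnn[OF y] by blast
    next
      show "continuous_on {0..x} E" by (rule continuous_on_subset[OF cE]) (use x in auto)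
    qed
    moreover have "E x \<le> E l"
    proof (rule DERIV_nonneg_imp_increasing_open[of x l])
      show "x \<le> l" using x by simp
      fix y assume "x < y" "y < l"
      hence y: "y \<in> {0<..<l}" using x by auto
      show "\<exists>z. DERIV E y :> z \<and> z \<ge> 0" using dE[OF y] Dnn[OF y] by blast
    next
      show "continuous_on {x..l} E" by (rule continuous_on_subset[OF cE]) (use x in auto)
    qed
    ultimately show "E x = 0" using E0 El by linarith
  qed
  have int0: "\<And>x. x \<in> {0<..<l} \<Longrightarrow> eta x = 0"
  proof -
    fix x assume x: "x \<in> {0<..<l}"
    have "D x = 0"
    proof (rule DERIV_local_const[OF dE[OF x], of "min x (l - x)"])
      show "0 < min x (l - x)" using x by auto
      show "\<forall>y. \<bar>x - y\<bar> < min x (l - x) \<longrightarrow> E x = E y"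
      proof (intro allI impI)
        fix y assume "\<bar>x - y\<bar> < min x (l - x)"
        hence y: "y \<in> {0..l}" using x by (auto simp: abs_less_iff)
        show "E x = E y" using Ez[OF y] Ez[of x] x by simp
      qed
    qed
    have pf: "Re (schnak_f a ve x lam) > 0" using P1[of x] x by auto
    have "(cmod (eta' x))\<^sup>2 \<ge> 0" by simp
    moreover have "Re (schnak_f a ve x lam) * (cmod (eta x))\<^sup>2 / DL \<ge> 0"
      using pf hDL by simp
    ultimately have "Re (schnak_f a ve x lam) * (cmod (eta x))\<^sup>2 / DL = 0"
      using \<open>D x = 0\<close> unfolding D_def by linarith
    thus "eta x = 0" using pf hDL by simp
  qed
  have allz: "\<And>x. x \<in> {0..l} \<Longrightarrow> eta x = 0"
  proof -
    fix x assume x: "x \<in> {0..l}"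
    have cl: "closed {y \<in> {0..l}. eta y = 0}"
      by (rule continuous_closed_preimage_constant[OF c0]) simp
    have "{0<..<l} \<subseteq> {y \<in> {0..l}. eta y = 0}" using int0 by auto
    hence "closure {0<..<l} \<subseteq> {y \<in> {0..l}. eta y = 0}"
      using cl closure_minimal by blast
    thus "eta x = 0" using x hl by auto
  qed
  show "\<forall>x\<in>{0..l}. eta x = 0" using allz by blast
  show "eta' 0 = 0"
  proof -
    have "((\<lambda>_. 0::complex) has_vector_derivative eta' 0) (at 0 within {0..l})"
      by (rule has_vector_derivative_transform_within[OF d1[of 0], of 1]) (use hl allz in auto)
    moreover have "((\<lambda>_. 0::complex) has_vector_derivative 0) (at 0 within {0..l})"
      by (rule has_vector_derivative_const)
    moreover have "at (0::real) within {0..l} \<noteq> bot"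
      using hl by (simp add: at_within_Icc_at_right)
    ultimately show ?thesis using vector_derivative_unique_within by blast
  qed
qed

end
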